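(* Let $M\ge 3$ be an integer, let $c>0$, $f_c>0$, $d>0$, $R_D>0$, $\theta_D\in(-\pi/2,\pi/2)$, and let $\alpha\in\mathbb{R}$ with $\alpha\neq 1$. For frequency offsets $\Delta f_1,\dots,\Delta f_M$ put $\xi_m=\Delta f_m-\frac{d^2f_c}{2R_D^2}(m-1)^2$ and $$X=\frac{2\pi^2}{c^2}\sum_{m,n=1}^M\big[2(\xi_m-\xi_n)\big]^2,\quad Y=\frac{4\pi^2 d f_c\cos\theta_D}{c^2}\sum_{m,n=1}^M 2(\xi_m-\xi_n)(m-n),\quad Z=\frac{8\pi^2 f_c^2 d^2\cos^2\theta_D}{c^2}\sum_{m,n=1}^M (m-n)^2 ,$$ and let $E=\{(R,\theta)\in\mathbb{R}^2: X(R-R_D)^2+2Y(R-R_D)(\theta-\theta_D)+Z(\theta-\theta_D)^2=M^2\}$, $\Delta_R=\max_E R-\min_E R$, $\Delta_\theta=\max_E\theta-\min_E\theta$. Let $X_{\rm pa},Y_{\rm pa},Z_{\rm pa}$ denote the values of $X,Y,Z$ when all $\Delta f_m=0$. If $$\Delta f_m=\frac{f_c d^2}{2R_D^2}\,\alpha\,(m-1)^2\quad\text{for all } m=1,\dots,M,$$ then $E$ is an ellipse and $$\Delta_R=\frac{2}{|1-\alpha|}\sqrt{\frac{M^2Z_{\rm pa}}{X_{\rm pa}Z_{\rm pa}-Y_{\rm pa}^2}},\qquad \Delta_\theta=2\sqrt{\frac{M^2X_{\rm pa}}{X_{\rm pa}Z_{\rm pa}-Y_{\rm pa}^2}} .$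$
   Context: Physical setting: a frequency diverse uniform linear array of $M$ antennas (spacing $d$, carrier $f_c$, offset $\Delta f_m$ at antenna $m$) focusing on a target at range $R_D$, angle $\theta_D$; $E$ models the half-power boundary of the beampattern in the (range, angle) plane and $\Delta_R,\Delta_\theta$ are the main-lobe beamwidths in range and angle. *)

theory Defs
  imports Complex_Main
begin

text \<open>Frequency offsets are given as a function df :: nat => real, used at indices 1..M.\<close>

definition xi :: "(nat \<Rightarrow> real) \<Rightarrow> real \<Rightarrow> real \<Rightarrow> real \<Rightarrow> nat \<Rightarrow> real" where
  "xi df fc d RD m = df m - d^2 * fc / (2 * RD^2) * (real m - 1)^2"

definition coefX :: "real \<Rightarrow> real \<Rightarrow> real \<Rightarrow> real \<Rightarrow> nat \<Rightarrow> (nat \<Rightarrow> real) \<Rightarrow> real" where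
  "coefX c fc d RD M df = 2 * pi^2 / c^2 *
     (\<Sum>m=1..M. \<Sum>n=1..M. (2 * (xi df fc d RD m - xi df fc d RD n))^2)"

definition coefY :: "real \<Rightarrow> real \<Rightarrow> real \<Rightarrow> real \<Rightarrow> real \<Rightarrow> nat \<Rightarrow> (nat \<Rightarrow> real) \<Rightarrow> real" where
  "coefY c fc d RD thD M df = 4 * pi^2 * d * fc * cos thD / c^2 *
     (\<Sum>m=1..M. \<Sum>n=1..M. 2 * (xi df fc d RD m - xi df fc d RD n) * (real m - real n))"

definition coefZ :: "real \<Rightarrow> real \<Rightarrow> real \<Rightarrow> real \<Rightarrow> nat \<Rightarrow> real" where
  "coefZ c fc d thD M = 8 * pi^2 * fc^2 * d^2 * (cos thD)^2 / c^2 *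
     (\<Sum>m=1..M. \<Sum>n=1..M. (real m - real n)^2)"

definition beamE :: "real \<Rightarrow> real \<Rightarrow> real \<Rightarrow> real \<Rightarrow> real \<Rightarrow> nat \<Rightarrow> (nat \<Rightarrow> real) \<Rightarrow> (real \<times> real) set" where
  "beamE c fc d RD thD M df =
     {(R, th). coefX c fc d RD M df * (R - RD)^2
             + 2 * coefY c fc d RD thD M df * (R - RD) * (th - thD)
             + coefZ c fc d thD M * (th - thD)^2 = (real M)^2}"

definition is_ellipse :: "(real \<times> real) set \<Rightarrow> bool" where
  "is_ellipse S \<longleftrightarrow> (\<exists>a b c x0 y0 K. a > 0 \<and> a * c - b^2 > 0 \<and> K > 0 \<and>
      S = {(x, y). a * (x - x0)^2 + 2 * b * (x - x0) * (y - y0) + c * (y - y0)^2 = K})"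

definition width_R :: "(real \<times> real) set \<Rightarrow> real" where
  "width_R S = Sup (fst ` S) - Inf (fst ` S)"

definition width_theta :: "(real \<times> real) set \<Rightarrow> real" where
  "width_theta S = Sup (snd ` S) - Inf (snd ` S)"

end

theory Submission
  imports Defs
begin

lemma ell_fst:
  fixes a b c K x0 y0 :: real
  assumes a: "a > 0" and D: "a*c - b^2 > 0" and K: "K > 0"
  defines "S \<equiv> {(x, y). a * (x - x0)^2 + 2 * b * (x - x0) * (y - y0) + c * (y - y0)^2 = K}"
  shows "Sup (fst ` S) - Inf (fst ` S) = 2 * sqrt (K * c / (a*c - b^2))"
proof -
  have c: "c > 0"
  proof (rule ccontr)
    assume "\<not> c > 0"
    hence "a*c \<le> 0" using a by (simp add: mult_nonneg_nonpos)
    thus False using D by (smt (verit) zero_le_power2)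
  qed
  define D0 where "D0 = a*c - b^2"
  have D0: "D0 > 0" using D D0_def by simp
  define r where "r = sqrt (K * c / D0)"
  have r0: "r \<ge> 0" unfolding r_def using K c D0 by simp
  have r2: "r^2 = K*c/D0" unfolding r_def using K c D0 by simp
  have bound: "(x - x0)^2 \<le> r^2" if "(x,y) \<in> S" for x y
  proof -
    have e: "a * (x - x0)^2 + 2 * b * (x - x0) * (y - y0) + c * (y - y0)^2 = K" using that S_def by simp
    have "c*K = (c*(y-y0) + b*(x-x0))^2 + D0 * (x-x0)^2"
      unfolding e[symmetric] D0_def by (simp add: algebra_simps power2_eq_square)
    hence "D0 * (x-x0)^2 \<le> c*K" by (smt (verit) zero_le_power2)
    hence "D0 * (x-x0)^2 \<le> D0 * r^2" using r2 D0 by (simp add: mult.commute)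
    thus ?thesis using D0 by (simp add: mult_le_cancel_left_pos)
  qed
  have mem: "(x0 + s, y0 - b*s/c) \<in> S" if "s^2 = r^2" for s
  proof -
    have "a * s^2 + 2 * b * s * (- b*s/c) + c * (- b*s/c)^2 = s^2 * D0 / c"
      using c unfolding D0_def by (simp add: field_simps power2_eq_square)
    also have "\<dots> = K" using that r2 c D0 by (simp add: field_simps)
    finally show ?thesis unfolding S_def by simp
  qed
  have sup: "Sup (fst ` S) = x0 + r"
  proof (rule cSup_eq_maximum)
    show "x0 + r \<in> fst ` S" using mem[of r] by force
    fix x assume "x \<in> fst ` S"
      then obtain y where "(x,y) \<in> S" by force
      from bound[OF this] have "\<bar>x - x0\<bar> \<le> r" using r0 by (metis power2_abs power2_le_imp_le)
      thus "x \<le> x0 + r" by simp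
  qed
  have inf: "Inf (fst ` S) = x0 - r"
  proof (rule cInf_eq_minimum)
    show "x0 - r \<in> fst ` S" using mem[of "-r"] by force
    fix x assume "x \<in> fst ` S"
      then obtain y where "(x,y) \<in> S" by force
      from bound[OF this] have "\<bar>x - x0\<bar> \<le> r" using r0 by (metis power2_abs power2_le_imp_le)
      thus "x0 - r \<le> x" by simp
  qed
  show ?thesis using sup inf r_def D0_def by simp
qed

lemma ell_snd:
  fixes a b c K x0 y0 :: real
  assumes a: "a > 0" and D: "a*c - b^2 > 0" and K: "K > 0"
  defines "S \<equiv> {(x, y). a * (x - x0)^2 + 2 * b * (x - x0) * (y - y0) + c * (y - y0)^2 = K}"
  shows "Sup (snd ` S) - Inf (snd ` S) = 2 * sqrt (K * a / (a*c - b^2))"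
proof -
  have c: "c > 0"
  proof (rule ccontr)
    assume "\<not> c > 0"
    hence "a*c \<le> 0" using a by (simp add: mult_nonneg_nonpos)
    thus False using D by (smt (verit) zero_le_power2)
  qed
  define S' where "S' = {(x, y). c * (x - y0)^2 + 2 * b * (x - y0) * (y - x0) + a * (y - x0)^2 = K}"
  have eq: "\<And>x y. (x,y) \<in> S \<longleftrightarrow> (y,x) \<in> S'" unfolding S_def S'_def by (simp add: algebra_simps)
  have "snd ` S = fst ` S'"
  proof
    show "snd ` S \<subseteq> fst ` S'" using eq by (force simp: image_iff)
    show "fst ` S' \<subseteq> snd ` S" using eq by (force simp: image_iff)
  qed
  moreover have "Sup (fst ` S') - Inf (fst ` S') = 2 * sqrt (K * a / (c*a - b^2))"
    unfolding S'_def by (rule ell_fst) (use c D K in \<open>auto simp: mult.commute\<close>)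
  ultimately show ?thesis by (simp add: mult.commute)
qed

theorem proposition1:
  fixes M :: nat and c fc d RD thD alpha :: real and df :: "nat \<Rightarrow> real"
  assumes "M \<ge> 3" and "c > 0" and "fc > 0" and "d > 0" and "RD > 0"
    and "- (pi / 2) < thD" and "thD < pi / 2"
    and "alpha \<noteq> 1"
    and "\<forall>m\<in>{1..M}. df m = fc * d^2 / (2 * RD^2) * alpha * (real m - 1)^2"
  shows "is_ellipse (beamE c fc d RD thD M df)
    \<and> width_R (beamE c fc d RD thD M df) =
        2 / \<bar>1 - alpha\<bar> * sqrt ((real M)^2 * coefZ c fc d thD M /
          (coefX c fc d RD M (\<lambda>_. 0) * coefZ c fc d thD M - (coefY c fc d RD thD M (\<lambda>_. 0))^2))
    \<and> width_theta (beamE c fc d RD thD M df) =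
        2 * sqrt ((real M)^2 * coefX c fc d RD M (\<lambda>_. 0) /
          (coefX c fc d RD M (\<lambda>_. 0) * coefZ c fc d thD M - (coefY c fc d RD thD M (\<lambda>_. 0))^2))"
proof -
  define k where "k = d^2 * fc / (2 * RD^2)"
  have k: "k > 0" unfolding k_def using assms by simp
  define \<beta> where "\<beta> = 1 - alpha"
  have \<beta>: "\<beta> \<noteq> 0" using assms \<beta>_def by simp
  define x0 where "x0 = (\<lambda>m::nat. xi (\<lambda>_. 0) fc d RD m)"
  have x0: "x0 m = - k * (real m - 1)^2" for m unfolding x0_def xi_def k_def by simp
  have xdf: "xi df fc d RD m = \<beta> * x0 m" if "m \<in> {1..M}" for m
    using assms(9,5) that unfolding xi_def x0 k_def \<beta>_def by (simp add: field_simps)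
  define u where "u = (\<lambda>m n. 2 * (x0 m - x0 n))"
  define w where "w = (\<lambda>m n::nat. real m - real n)"
  define SA where "SA = (\<Sum>m=1..M. \<Sum>n=1..M. (u m n)^2)"
  define SB where "SB = (\<Sum>m=1..M. \<Sum>n=1..M. u m n * w m n)"
  define SC where "SC = (\<Sum>m=1..M. \<Sum>n=1..M. (w m n)^2)"
  define Q where "Q = (\<lambda>t. \<Sum>m=1..M. \<Sum>n=1..M. (u m n - t * w m n)^2)"
  have Qeq: "Q t = SA - 2 * t * SB + t^2 * SC" for t
    unfolding Q_def SA_def SB_def SC_def
    by (simp add: power2_diff sum.distrib sum_subtractf sum_distrib_left algebra_simps power_mult_distrib)
  have sub: "{2,3} \<subseteq> {1..M}" using assms(1) by auto
  have Qlow: "(\<Sum>m=1..M. \<Sum>n=1..M. f m n) \<ge> f 1 2 + f 1 3" if nn: "\<And>m n. f m n \<ge> (0::real)" for f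
  proof -
    have "(\<Sum>m=1..M. \<Sum>n=1..M. f m n) \<ge> (\<Sum>n=1..M. f 1 n)"
      by (rule member_le_sum) (use assms(1) nn in \<open>auto intro: sum_nonneg\<close>)
    moreover have "(\<Sum>n=1..M. f 1 n) \<ge> (\<Sum>n\<in>{2,3}. f 1 n)"
      by (rule sum_mono2) (use sub nn in auto)
    ultimately show ?thesis by simp
  qed
  have Qpos: "Q t > 0" for t
  proof -
    have "Q t \<ge> (u 1 2 - t * w 1 2)^2 + (u 1 3 - t * w 1 3)^2"
      unfolding Q_def by (rule Qlow) simp
    moreover have "(u 1 2 - t * w 1 2)^2 + (u 1 3 - t * w 1 3)^2 = (2*k + t)^2 + (8*k + 2*t)^2"
      unfolding u_def w_def x0 by (simp add: algebra_simps power2_eq_square)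
    moreover have "(2*k + t)^2 + (8*k + 2*t)^2 > 0"
    proof (rule ccontr)
      assume "\<not> ?thesis"
      hence "2*k + t = 0" "8*k + 2*t = 0" by (smt (verit) zero_le_power2 power_eq_0_iff zero_less_power2)+
      thus False using k by simp
    qed
    ultimately show ?thesis by simp
  qed
  have SCpos: "SC > 0"
  proof -
    have "SC \<ge> (w 1 2)^2 + (w 1 3)^2" unfolding SC_def by (rule Qlow) simp
    thus ?thesis unfolding w_def by simp
  qed
  have CS: "SA * SC - SB^2 > 0"
  proof -
    have "Q (SB/SC) = SA - SB^2/SC" using SCpos unfolding Qeq by (simp add: field_simps power2_eq_square)
    hence "SA - SB^2/SC > 0" using Qpos[of "SB/SC"] by linarith
    thus ?thesis using SCpos by (simp add: field_simps)
  qed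
  have cosp: "cos thD > 0" using assms(6,7) by (intro cos_gt_zero_pi) auto
  have SApos: "SA > 0"
  proof -
    have "SA \<ge> (u 1 2)^2 + (u 1 3)^2" unfolding SA_def by (rule Qlow) simp
    moreover have "(u 1 2)^2 + (u 1 3)^2 > 0" unfolding u_def x0 using k by simp
    ultimately show ?thesis by simp
  qed
  define X0 where "X0 = coefX c fc d RD M (\<lambda>_. 0)"
  define Y0 where "Y0 = coefY c fc d RD thD M (\<lambda>_. 0)"
  define Z where "Z = coefZ c fc d thD M"
  have X0e: "X0 = 2 * pi^2 / c^2 * SA" unfolding X0_def coefX_def SA_def u_def x0_def by simp
  have Y0e: "Y0 = 4 * pi^2 * d * fc * cos thD / c^2 * SB" unfolding Y0_def coefY_def SB_def u_def w_def x0_def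
    by (simp add: mult.assoc)
  have Ze: "Z = 8 * pi^2 * fc^2 * d^2 * (cos thD)^2 / c^2 * SC" unfolding Z_def coefZ_def SC_def w_def by simp
  have Xdf: "coefX c fc d RD M df = \<beta>^2 * X0"
  proof -
    have "(\<Sum>m=1..M. \<Sum>n=1..M. (2 * (xi df fc d RD m - xi df fc d RD n))^2) = (\<Sum>m=1..M. \<Sum>n=1..M. \<beta>^2 * (u m n)^2)"
      by (intro sum.cong refl) (simp add: xdf u_def algebra_simps power2_eq_square)
    also have "\<dots> = \<beta>^2 * SA" unfolding SA_def by (simp add: sum_distrib_left)
    finally show ?thesis unfolding coefX_def X0e by simp
  qed
  have Ydf: "coefY c fc d RD thD M df = \<beta> * Y0"
  proof -
    have "(\<Sum>m=1..M. \<Sum>n=1..M. 2 * (xi df fc d RD m - xi df fc d RD n) * (real m - real n)) = (\<Sum>m=1..M. \<Sum>n=1..M. \<beta> * (u m n * w m n))"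
      by (intro sum.cong refl) (simp add: xdf u_def w_def algebra_simps)
    also have "\<dots> = \<beta> * SB" unfolding SB_def by (simp add: sum_distrib_left)
    finally show ?thesis unfolding coefY_def Y0e by simp
  qed
  define D0 where "D0 = X0 * Z - Y0^2"
  have D0e: "D0 = 16 * pi^4 * fc^2 * d^2 * (cos thD)^2 / c^4 * (SA * SC - SB^2)"
    unfolding D0_def X0e Y0e Ze using assms(2) by (simp add: field_simps power2_eq_square power4_eq_xxxx)
  have D0p: "D0 > 0" unfolding D0e using CS assms cosp by simp
  have X0p: "X0 > 0" unfolding X0e using SApos assms by simp
  have Zp: "Z > 0" unfolding Ze using SCpos assms cosp by simp
  have ap: "\<beta>^2 * X0 > 0" using X0p \<beta> by simp
  have Dp: "(\<beta>^2 * X0) * Z - (\<beta> * Y0)^2 = \<beta>^2 * D0" unfolding D0_def by (simp add: algebra_simps power2_eq_square)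
  have Dpp: "(\<beta>^2 * X0) * Z - (\<beta> * Y0)^2 > 0" unfolding Dp using D0p \<beta> by simp
  have Kp: "(real M)^2 > 0" using assms(1) by simp
  have E: "beamE c fc d RD thD M df = {(x, y). (\<beta>^2 * X0) * (x - RD)^2 + 2 * (\<beta> * Y0) * (x - RD) * (y - thD) + Z * (y - thD)^2 = (real M)^2}"
    unfolding beamE_def Xdf Ydf Z_def ..
  have ell: "is_ellipse (beamE c fc d RD thD M df)"
    unfolding is_ellipse_def E using ap Dpp Kp by blast
  have wR: "width_R (beamE c fc d RD thD M df) = 2 * sqrt ((real M)^2 * Z / (\<beta>^2 * D0))"
    unfolding width_R_def E using ell_fst[OF ap Dpp Kp] Dp by simp
  have wT: "width_theta (beamE c fc d RD thD M df) = 2 * sqrt ((real M)^2 * (\<beta>^2 * X0) / (\<beta>^2 * D0))"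
    unfolding width_theta_def E using ell_snd[OF ap Dpp Kp] Dp by simp
  have "sqrt ((real M)^2 * Z / (\<beta>^2 * D0)) = sqrt ((real M)^2 * Z / D0) / \<bar>\<beta>\<bar>"
    by (simp add: real_sqrt_divide real_sqrt_mult divide_divide_eq_left mult.commute)
  moreover have "(real M)^2 * (\<beta>^2 * X0) / (\<beta>^2 * D0) = (real M)^2 * X0 / D0" using \<beta> by simp
  ultimately show ?thesis using ell wR wT unfolding D0_def X0_def Y0_def Z_def \<beta>_def by simp
qed
end
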